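(* Let $\mathbf{X}$ be a Banach space and $\mathcal{S}\subset\mathbf{X}$. If $\mathbb{P}$ is a Borel probability measure on $\mathcal{S}$ of growth order $s_0\in[0,\infty)$, then for every $s>s_0$ and every codec $\mathcal{C}=((E_R,D_R))_{R\in\mathbb{N}}$ we have $\mathbb{P}^\ast(\mathcal{A}^s_{\mathcal{S},\mathbf{X}}(\mathcal{C}))=0$.
   Context: Let $(\mathbf{X},\|\cdot\|_{\mathbf{X}})$ be a real Banach space and $\mathcal{S}\subset\mathbf{X}$. A codec is a sequence $\mathcal{C}=((E_R,D_R))_{R\in\mathbb{N}}$ of maps $E_R:\mathcal{S}\to\{0,1\}^R$, $D_R:\{0,1\}^R\to\mathbf{X}$. For $s\ge0$, $\mathcal{A}^s_{\mathcal{S},\mathbf{X}}(\mathcal{C})=\{\mathbf{x}\in\mathcal{S}:\sup_{R\in\mathbb{N}}R^s\|\mathbf{x}-D_R(E_R(\mathbf{x}))\|_{\mathbf{X}}<\infty\}$. $\mathcal{S}$ carries the trace of the Borel $\sigma$-algebra of $\mathbf{X}$; $\mathbb{P}^\ast$ is the induced outer measure $\mathbb{P}^\ast(M)=\inf\{\sum_n\mathbb{P}(M_n):M_n\text{ measurable},M\subset\bigcup_nM_n\}$. $\mathbb{P}$ has (logarithmic) growth order $s_0$ w.r.t. $\mathbf{X}$ if for every $s>s_0$ there exist $\varepsilon_0,c>0$ with $\mathbb{P}(\mathcal{S}\cap\mathcal{B}(\mathbf{x},\varepsilon;\mathbf{X}))\le2^{-c\varepsilon^{-1/s}}$ for all $\mathbf{x}\in\mathbf{X}$,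 $\varepsilon\in(0,\varepsilon_0)$, where $\mathcal{B}(\mathbf{x},\varepsilon;\mathbf{X})$ is the closed ball. *)

theory Defs
  imports "HOL-Probability.Probability"
begin

text \<open>A codec: encoders E R : S -> {0,1}^R (bit strings as bool lists of length R)
  and decoders D R : {0,1}^R -> X.\<close>
definition is_codec :: "'a set \<Rightarrow> (nat \<Rightarrow> 'a \<Rightarrow> bool list) \<Rightarrow> (nat \<Rightarrow> bool list \<Rightarrow> 'a) \<Rightarrow> bool" where
  "is_codec S E D \<longleftrightarrow> (\<forall>R. \<forall>x\<in>S. length (E R x) = R)"

definition approx_class :: "real \<Rightarrow> 'a::real_normed_vector set \<Rightarrow> (nat \<Rightarrow> 'a \<Rightarrow> bool list) \<Rightarrow> (nat \<Rightarrow> bool list \<Rightarrow> 'a) \<Rightarrow> 'a set" where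
  "approx_class s S E D =
     {x\<in>S. \<exists>C. \<forall>R\<ge>1. real R powr s * norm (x - D R (E R x)) \<le> C}"

definition outer_meas :: "'a measure \<Rightarrow> 'a set \<Rightarrow> ennreal" where
  "outer_meas P M = (INF Ms \<in> {Ms :: nat \<Rightarrow> 'a set. range Ms \<subseteq> sets P \<and> M \<subseteq> (\<Union>n. Ms n)}.
                        (\<Sum>n. emeasure P (Ms n)))"

definition has_growth_order :: "'a::real_normed_vector measure \<Rightarrow> 'a set \<Rightarrow> real \<Rightarrow> bool" where
  "has_growth_order P S s0 \<longleftrightarrow>
     (\<forall>s>s0. \<exists>\<epsilon>0>0. \<exists>c>0. \<forall>x. \<forall>\<epsilon>. 0 < \<epsilon> \<and> \<epsilon> < \<epsilon>0 \<longrightarrow>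
        measure P (S \<inter> cball x \<epsilon>) \<le> 2 powr (- c * \<epsilon> powr (-1 / s)))"

end

theory Submission
  imports Defs
begin

lemma lists_fin: "finite {xs::bool list. length xs = R}" "card {xs::bool list. length xs = R} = 2 ^ R"
proof -
  have e: "{xs::bool list. length xs = R} = {xs. set xs \<subseteq> UNIV \<and> length xs = R}" by auto
  show "finite {xs::bool list. length xs = R}" unfolding e by (rule finite_lists_length_eq) simp
  show "card {xs::bool list. length xs = R} = 2 ^ R" unfolding e using card_lists_length_eq[of "UNIV::bool set" R] by simp
qed

theorem proposition2p4:
  fixes S :: "'a::banach set" and P :: "'a measure" and s0 s :: real
    and E :: "nat \<Rightarrow> 'a \<Rightarrow> bool list" and D :: "nat \<Rightarrow> bool list \<Rightarrow> 'a"
  assumes "prob_space P"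
    and "space P = S"
    and "sets P = sets (restrict_space borel S)"
    and "0 \<le> s0"
    and "has_growth_order P S s0"
    and "s > s0"
    and "is_codec S E D"
  shows "outer_meas P (approx_class s S E D) = 0"
proof -
  interpret prob_space P by fact
  define t where "t = (s0 + s) / 2"
  have t0: "t > s0" "t > 0" "s > t" "s > 0" using assms(4,6) by (auto simp: t_def)
  obtain \<epsilon>0 c where e0: "\<epsilon>0 > 0" and c0: "c > 0" and gr:
    "\<And>x \<epsilon>. 0 < \<epsilon> \<Longrightarrow> \<epsilon> < \<epsilon>0 \<Longrightarrow> measure P (S \<inter> cball x \<epsilon>) \<le> 2 powr (- c * \<epsilon> powr (-1 / t))"
    using assms(5) t0(1) unfolding has_growth_order_def by blast
  have ballm: "S \<inter> cball x r \<in> sets P" for x r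
    unfolding assms(3) sets_restrict_space by auto
  define B where "B n R = (\<Union>b\<in>{xs::bool list. length xs = R}. S \<inter> cball (D R b) (real (Suc n) * real R powr (-s)))" for n R
  define N where "N n = (\<Inter>R. B n (Suc R))" for n
  have Bm: "B n R \<in> sets P" for n R
    unfolding B_def by (intro sets.finite_UN lists_fin ballm)
  have Nm: "N n \<in> sets P" for n
    unfolding N_def using Bm by auto
  have N0: "measure P (N n) = 0" for n
  proof -
    define k where "k = c * real (Suc n) powr (-1/t)"
    define q where "q = s / t"
    have k0: "k > 0" using c0 by (simp add: k_def)
    have q1: "q > 1" using t0 by (simp add: q_def)
    have lim1: "(\<lambda>R. real (Suc n) * real R powr (-s)) \<longlonglongrightarrow> real (Suc n) * 0"
      by (intro tendsto_mult tendsto_const tendsto_neg_powr filterlim_real_sequentially) (use t0 in auto)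
    have ev1: "eventually (\<lambda>R. real (Suc n) * real R powr (-s) < \<epsilon>0) sequentially"
      using order_tendstoD(2)[OF lim1] e0 by simp
    have lim2: "(\<lambda>R. real R powr (1 - q)) \<longlonglongrightarrow> 0"
      by (intro tendsto_neg_powr filterlim_real_sequentially) (use q1 in auto)
    have ev2: "eventually (\<lambda>R. real R powr (1 - q) < k / 2) sequentially"
      using order_tendstoD(2)[OF lim2, of "k/2"] k0 by simp
    have ev: "eventually (\<lambda>R. measure P (N n) \<le> 2 powr (- real R)) sequentially"
      using ev1 ev2 eventually_gt_at_top[of 0]
    proof eventually_elim
      case (elim R)
      define r where "r = real (Suc n) * real R powr (-s)"
      have R0: "real R > 0" using elim by simp
      have r0: "r > 0" using R0 by (simp add: r_def)
      have "measure P (N n) \<le> measure P (B n R)"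
      proof -
        have "N n \<subseteq> B n (Suc (R - 1))" unfolding N_def by blast
        moreover have "Suc (R - 1) = R" using elim(3) by simp
        ultimately have "N n \<subseteq> B n R" by simp
        then show ?thesis by (intro finite_measure_mono Bm)
      qed
      also have "\<dots> \<le> (\<Sum>b\<in>{xs::bool list. length xs = R}. measure P (S \<inter> cball (D R b) r))"
        unfolding B_def r_def by (intro measure_UNION_le lists_fin ballm)
      also have "\<dots> \<le> (\<Sum>b\<in>{xs::bool list. length xs = R}. 2 powr (- c * r powr (-1 / t)))"
        by (intro sum_mono gr r0) (use elim in \<open>auto simp: r_def\<close>)
      also have "\<dots> = 2 ^ R * 2 powr (- c * r powr (-1 / t))"
        by (simp add: lists_fin)
      also have "r powr (-1/t) = real (Suc n) powr (-1/t) * real R powr q"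
        unfolding r_def q_def using R0 t0
        by (simp add: powr_mult powr_powr)
      also have "2 ^ R * 2 powr (- c * (real (Suc n) powr (-1/t) * real R powr q)) = 2 powr (real R - k * real R powr q)"
      proof -
        have "(2::real)^R = 2 powr real R" by (simp add: powr_realpow)
        then show ?thesis by (simp add: powr_add[symmetric] k_def algebra_simps)
      qed
      also have "\<dots> \<le> 2 powr (- real R)"
      proof -
        have "real R = real R powr (1 - q) * real R powr q"
          using R0 by (simp add: powr_add[symmetric])
        also have "\<dots> \<le> (k/2) * real R powr q"
          using elim(2) by (intro mult_right_mono) auto
        finally show ?thesis by simp
      qed
      finally show ?case .
    qed
    have lim3: "(\<lambda>R. 2 powr (- real R)) \<longlonglongrightarrow> 0"
    proof -
      have "(\<lambda>R. (1/2::real)^R) \<longlonglongrightarrow> 0" by (rule LIMSEQ_realpow_zero) auto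
      moreover have "(1/2::real)^R = 2 powr (- real R)" for R
        by (simp add: powr_minus powr_realpow power_one_over inverse_eq_divide)
      ultimately show ?thesis by simp
    qed
    have "measure P (N n) \<le> 0"
      using ev lim3 by (intro tendsto_le[OF _ lim3 tendsto_const]) auto
    then show ?thesis by (simp add: measure_nonneg antisym)
  qed
  have Nnull: "(\<Union>n. N n) \<in> null_sets P"
  proof (rule null_sets_UN)
    fix n show "N n \<in> null_sets P" using N0[of n] Nm[of n] by (simp add: null_sets_def emeasure_eq_measure)
  qed
  have sub: "approx_class s S E D \<subseteq> (\<Union>n. N n)"
  proof
    fix x assume "x \<in> approx_class s S E D"
    then obtain C where xS: "x \<in> S" and C: "\<And>R. R \<ge> 1 \<Longrightarrow> real R powr s * norm (x - D R (E R x)) \<le> C"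
      unfolding approx_class_def by auto
    define n where "n = nat \<lceil>C\<rceil>"
    have Cn: "C \<le> real (Suc n)" unfolding n_def by linarith
    have "x \<in> N n" unfolding N_def B_def
    proof (intro INT_I UN_I IntI)
      fix R
      show "E (Suc R) x \<in> {xs. length xs = Suc R}" using assms(7) xS by (simp add: is_codec_def)
      have p: "real (Suc R) powr s > 0" by simp
      have "norm (x - D (Suc R) (E (Suc R) x)) \<le> C / real (Suc R) powr s"
        using C[of "Suc R"] p by (simp add: field_simps)
      also have "\<dots> \<le> real (Suc n) / real (Suc R) powr s"
        using Cn p by (intro divide_right_mono) auto
      also have "\<dots> = real (Suc n) * real (Suc R) powr (-s)"
        by (simp add: powr_minus divide_inverse)
      finally show "x \<in> cball (D (Suc R) (E (Suc R) x)) (real (Suc n) * real (Suc R) powr (-s))"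
        by (simp add: dist_norm norm_minus_commute)
    qed (use xS in auto)
    then show "x \<in> (\<Union>n. N n)" by auto
  qed
  have "outer_meas P (approx_class s S E D) \<le> (\<Sum>i. emeasure P (\<Union>n. N n))"
    unfolding outer_meas_def using sub Nm
    by (intro INF_lower) auto
  also have "\<dots> = 0" using Nnull by (simp add: null_setsD1)
  finally show ?thesis by simp
qed

end
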